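(* Let $(a_0,\ldots,a_n)$ be a finite sequence of positive integers. For every $\varepsilon>0$ there is $m_0>0$ such that for every integer $m\ge m_0$ and every positive integer $N$, $$|\Phi^-(\beta^N)-\Phi^-(\beta^{N+1})|<\frac{\varepsilon}{2}.$$
   Context: For positive integers $d_0,d_1,\ldots$, $[d_0,d_1,d_2,\ldots]$ denotes the continued fraction $\cfrac{1}{d_0+\cfrac{1}{d_1+\cfrac{1}{d_2+\cdots}}}$, and for $\beta=[d_0,d_1,\ldots]$ we write $\alpha_j(\beta)=[d_j,d_{j+1},\ldots]$. $\Phi(\beta)=\sum_{k\ge 0}\alpha_0(\beta)\cdots\alpha_{k-1}(\beta)\log\frac{1}{\alpha_k(\beta)}$ is the Yoccoz Brjuno function. For integers $m\ge1$, $N\ge1$, $\beta^N$ is the number whose digits (indexed from $0$) are $a_0,\ldots,a_n$ in positions $0,\ldots,n$, $N$ in position $n+m$, and $1$ in all other positions. For such $\beta$ (with $m$ fixed), $\Phi^-(\beta)=\Phi(\beta)-\alpha_0(\beta)\cdots\alpha_{n+m-1}(\beta)\log\frac{1}{\alpha_{n+m}(\beta)}$. *)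

theory Defs
  imports Complex_Main
begin

fun cf_trunc :: "(nat \<Rightarrow> nat) \<Rightarrow> nat \<Rightarrow> real" where
  "cf_trunc d 0 = 0"
| "cf_trunc d (Suc k) = 1 / (real (d 0) + cf_trunc (\<lambda>i. d (Suc i)) k)"

definition cf :: "(nat \<Rightarrow> nat) \<Rightarrow> real" where
  "cf d = lim (\<lambda>k. cf_trunc d k)"

definition cf_alpha :: "(nat \<Rightarrow> nat) \<Rightarrow> nat \<Rightarrow> real" where
  "cf_alpha d j = cf (\<lambda>i. d (i + j))"

text \<open>Yoccoz Brjuno function, in terms of the digit sequence of beta.\<close>
definition brjuno :: "(nat \<Rightarrow> nat) \<Rightarrow> real" where
  "brjuno d = (\<Sum>k. (\<Prod>i<k. cf_alpha d i) * ln (1 / cf_alpha d k))"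

text \<open>Digits of beta^N: a_0..a_n in positions 0..n (n = length a - 1),
  N in position n+m, 1 elsewhere.\<close>
definition beta_digits :: "nat list \<Rightarrow> nat \<Rightarrow> nat \<Rightarrow> nat \<Rightarrow> nat" where
  "beta_digits a m N i =
     (if i < length a then a ! i else if i = length a - 1 + m then N else 1)"

text \<open>Phi^- with parameters n = length a - 1 and m.\<close>
definition brjuno_minus :: "nat list \<Rightarrow> nat \<Rightarrow> (nat \<Rightarrow> nat) \<Rightarrow> real" where
  "brjuno_minus a m d = brjuno d
     - (\<Prod>i< length a - 1 + m. cf_alpha d i) * ln (1 / cf_alpha d (length a - 1 + m))"

end

theory Submission
  imports Defs
begin

lemma cf_trunc_nonneg: "cf_trunc d k \<ge> 0"
  by (induction k arbitrary: d) auto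

definition gold :: real where "gold = (sqrt 5 - 1) / 2"

lemma gold_props: "0 < gold" "gold < 1" "gold * (1 + gold) = 1"
proof -
  have s: "sqrt 5 * sqrt 5 = 5" by simp
  have "2 < sqrt 5" by (rule real_less_rsqrt) simp
  moreover have "sqrt 5 < 3" by (rule real_sqrt_less_mono[of 5 9, simplified]) 
  ultimately show "0 < gold" "gold < 1" by (auto simp: gold_def)
  show "gold * (1 + gold) = 1" unfolding gold_def using s by (simp add: algebra_simps power2_eq_square) (simp add: field_simps)
qed

lemma gold_contract:
  fixes y :: real assumes y0: "y \<ge> 0"
  shows "\<bar>1 / (1 + y) - gold\<bar> \<le> \<bar>y - gold\<bar> * gold"
proof -
  have g1: "gold = 1 / (1 + gold)" using gold_props by (simp add: field_simps)
  have "1 / (1 + y) - gold = (gold - y) * (1 / (1 + y)) * gold"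
    using y0 gold_props g1 by (simp add: field_simps)
  hence e: "\<bar>1 / (1 + y) - gold\<bar> = \<bar>y - gold\<bar> * (1 / (1 + y)) * gold"
    using y0 gold_props by (simp add: abs_mult abs_minus_commute)
  have "1 / (1 + y) \<le> 1" using y0 by simp
  hence "\<bar>y - gold\<bar> * (1 / (1 + y)) * gold \<le> \<bar>y - gold\<bar> * 1 * gold"
    using y0 gold_props by (intro mult_right_mono mult_left_mono) auto
  thus ?thesis using e by simp
qed

lemma one_trunc_bound: "\<bar>cf_trunc (\<lambda>_. 1) k - gold\<bar> \<le> gold ^ k"
proof (induction k)
  case 0
  then show ?case using gold_props by simp
next
  case (Suc k)
  have "\<bar>cf_trunc (\<lambda>_. 1) (Suc k) - gold\<bar> \<le> \<bar>cf_trunc (\<lambda>_. 1) k - gold\<bar> * gold"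
    using gold_contract[OF cf_trunc_nonneg[of "\<lambda>_. 1" k]] by simp
  also have "\<dots> \<le> gold ^ k * gold" using Suc gold_props by (simp add: mult_right_mono)
  finally show ?case by (simp add: mult.commute)
qed

lemma one_trunc_lim: "cf_trunc (\<lambda>_. 1) \<longlonglongrightarrow> gold"
proof -
  have "Zfun (\<lambda>k. gold ^ k - 0) sequentially"
    using LIMSEQ_power_zero[of gold] gold_props by (simp add: tendsto_Zfun_iff)
  hence "Zfun (\<lambda>k. cf_trunc (\<lambda>_. 1) k - gold) sequentially"
    by (rule Zfun_le) (use one_trunc_bound gold_props in auto)
  then show ?thesis by (simp add: tendsto_Zfun_iff)
qed

lemma cf_conv:
  "\<forall>d. (\<forall>i. d i \<ge> 1) \<longrightarrow> (\<forall>i\<ge>L. d i = 1) \<longrightarrow> (cf_trunc d \<longlonglongrightarrow> cf d) \<and> cf d > 0"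
proof (induction L)
  case 0
  show ?case
  proof (intro allI impI)
    fix d :: "nat \<Rightarrow> nat" assume "\<forall>i\<ge>0. d i = 1"
    hence "d = (\<lambda>_. 1)" by auto
    then show "(cf_trunc d \<longlonglongrightarrow> cf d) \<and> cf d > 0"
      using one_trunc_lim gold_props by (simp add: cf_def limI)
  qed
next
  case (Suc L)
  show ?case
  proof (intro allI impI)
    fix d :: "nat \<Rightarrow> nat" assume d1: "\<forall>i. d i \<ge> 1" and dL: "\<forall>i\<ge>Suc L. d i = 1"
    define d' where "d' = (\<lambda>i. d (Suc i))"
    have "(\<forall>i. d' i \<ge> 1)" "(\<forall>i\<ge>L. d' i = 1)" using d1 dL by (auto simp: d'_def)
    with Suc have IH: "cf_trunc d' \<longlonglongrightarrow> cf d'" "cf d' > 0" by blast+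
    have "real (d 0) + cf d' > 0" using IH(2) by (simp add: add_nonneg_pos)
    hence den: "real (d 0) + cf d' \<noteq> 0" by simp
    have "(\<lambda>k. 1 / (real (d 0) + cf_trunc d' k)) \<longlonglongrightarrow> 1 / (real (d 0) + cf d')"
      using tendsto_divide[OF tendsto_const tendsto_add[OF tendsto_const IH(1)] den] by simp
    hence "(\<lambda>k. cf_trunc d (Suc k)) \<longlonglongrightarrow> 1 / (real (d 0) + cf d')" by (simp add: d'_def)
    hence lim: "cf_trunc d \<longlonglongrightarrow> 1 / (real (d 0) + cf d')" by (rule LIMSEQ_imp_Suc)
    hence "cf d = 1 / (real (d 0) + cf d')" by (simp add: cf_def limI)
    then show "(cf_trunc d \<longlonglongrightarrow> cf d) \<and> cf d > 0" using lim IH(2)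
      by (simp add: add_pos_nonneg)
  qed
qed

lemma cf_rec:
  assumes "\<And>i. d i \<ge> 1" "\<And>i. i \<ge> L \<Longrightarrow> d i = 1"
  shows "cf d = 1 / (real (d 0) + cf (\<lambda>i. d (Suc i)))" "cf d > 0"
proof -
  define d' where "d' = (\<lambda>i. d (Suc i))"
  have "(\<forall>i. d' i \<ge> 1)" "(\<forall>i\<ge>L. d' i = 1)" using assms by (auto simp: d'_def)
  with cf_conv have IH: "cf_trunc d' \<longlonglongrightarrow> cf d'" "cf d' > 0" by blast+
  have "real (d 0) + cf d' > 0" using IH(2) by (simp add: add_nonneg_pos)
    hence den: "real (d 0) + cf d' \<noteq> 0" by simp
  have "(\<lambda>k. 1 / (real (d 0) + cf_trunc d' k)) \<longlonglongrightarrow> 1 / (real (d 0) + cf d')"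
    using tendsto_divide[OF tendsto_const tendsto_add[OF tendsto_const IH(1)] den] by simp
  hence "(\<lambda>k. cf_trunc d (Suc k)) \<longlonglongrightarrow> 1 / (real (d 0) + cf d')" by (simp add: d'_def)
  hence lim: "cf_trunc d \<longlonglongrightarrow> 1 / (real (d 0) + cf d')" by (rule LIMSEQ_imp_Suc)
  thus "cf d = 1 / (real (d 0) + cf (\<lambda>i. d (Suc i)))" by (simp add: cf_def limI d'_def)
  show "cf d > 0" using cf_conv assms by blast
qed

lemma cf_alpha_rec:
  assumes "\<And>i. d i \<ge> 1" "\<And>i. i \<ge> L \<Longrightarrow> d i = 1"
  shows "cf_alpha d j = 1 / (real (d j) + cf_alpha d (Suc j))" "cf_alpha d j > 0"
proof -
  have a1: "\<And>i. (\<lambda>i. d (i + j)) i \<ge> 1" using assms by simp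
  have a2: "\<And>i. i \<ge> L \<Longrightarrow> (\<lambda>i. d (i + j)) i = 1" using assms by simp
  show "cf_alpha d j = 1 / (real (d j) + cf_alpha d (Suc j))"
    using cf_rec(1)[OF a1 a2] by (simp add: cf_alpha_def)
  show "cf_alpha d j > 0" using cf_rec(2)[OF a1 a2] by (simp add: cf_alpha_def)
qed

locale cfseq =
  fixes x :: "nat \<Rightarrow> real" and d :: "nat \<Rightarrow> nat"
  assumes rec: "\<And>j. x j = 1 / (real (d j) + x (Suc j))"
    and pos: "\<And>j. x j > 0"
    and dpos: "\<And>j. d j \<ge> 1"
begin

lemma le1: "x j \<le> 1"
proof -
  have "real (d j) + x (Suc j) \<ge> 1" using dpos[of j] pos[of "Suc j"] by linarith
  thus ?thesis using rec[of j] by simp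
qed

lemma lower: "x j \<ge> 1 / (real (d j) + 1)"
proof -
  have "real (d j) + x (Suc j) \<le> real (d j) + 1" using le1[of "Suc j"] by simp
  moreover have "real (d j) + x (Suc j) > 0" using pos[of "Suc j"] by (simp add: add_nonneg_pos)
  ultimately show ?thesis using rec[of j] by (simp add: frac_le)
qed

lemma pair: "x j * x (Suc j) \<le> 1 / 2"
proof -
  define y where "y = x (Suc j)"
  have y: "0 < y" "y \<le> 1" using pos le1 by (auto simp: y_def)
  have "x j * y = y / (real (d j) + y)" using rec[of j] by (simp add: y_def)
  also have "\<dots> \<le> y / (1 + y)" using y dpos[of j] by (intro divide_left_mono) auto
  also have "\<dots> \<le> 1 / 2" using y by (simp add: field_simps)
  finally show ?thesis by (simp add: y_def)
qed

lemma prod_nonneg': "0 \<le> (\<Prod>i\<in>A. x (f i))"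
  using pos by (simp add: prod_nonneg less_imp_le)

lemma prod_le1: "(\<Prod>i\<in>A. x (f i)) \<le> 1"
  using pos le1 by (simp add: prod_le_1 less_imp_le)

lemma prod_bound: "(\<Prod>i<k. x (s + i)) \<le> 2 * (3/4) ^ k"
proof (induction k rule: less_induct)
  case (less k)
  show ?case
  proof (cases k)
    case 0 then show ?thesis by simp
  next
    case (Suc k1)
    show ?thesis
    proof (cases k1)
      case 0
      then show ?thesis using Suc le1[of s] by simp
    next
      case (Suc k2)
      have kk: "k = Suc (Suc k2)" using \<open>k = Suc k1\<close> Suc by simp
      have "(\<Prod>i<k. x (s + i)) = (\<Prod>i<k2. x (s + i)) * (x (s + k2) * x (Suc (s + k2)))"
        by (simp add: kk mult.assoc)
      also have "\<dots> \<le> (2 * (3/4) ^ k2) * (1/2)"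
      proof (rule mult_mono)
        show "(\<Prod>i<k2. x (s + i)) \<le> 2 * (3/4) ^ k2" using less[of k2] kk by simp
        show "x (s + k2) * x (Suc (s + k2)) \<le> 1/2" by (rule pair)
        show "0 \<le> 2 * (3/4::real) ^ k2" by simp
        show "0 \<le> x (s + k2) * x (Suc (s + k2))" using pos[of "s+k2"] pos[of "Suc (s+k2)"] by simp
      qed
      also have "\<dots> \<le> 2 * (3/4) ^ k" by (simp add: kk)
      finally show ?thesis .
    qed
  qed
qed

end

definition bt :: "(nat \<Rightarrow> real) \<Rightarrow> nat \<Rightarrow> real" where
  "bt x k = (\<Prod>i<k. x i) * ln (1 / x k)"

context cfseq begin

lemma ln_nonneg: "ln (1 / x k) \<ge> 0"
  using pos[of k] le1[of k] by simp

lemma bt_nonneg: "bt x k \<ge> 0"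
  unfolding bt_def using prod_nonneg'[of id] ln_nonneg by simp

lemma bt_le: "bt x k \<le> 2 * (3/4) ^ k * ln (1 / x k)"
proof -
  have "(\<Prod>i<k. x i) \<le> 2 * (3/4) ^ k" using prod_bound[where s=0 and k=k] by simp
  thus ?thesis unfolding bt_def using ln_nonneg[of k] by (rule mult_right_mono)
qed

lemma ln_le_digit: assumes "d k \<le> Dd" shows "ln (1 / x k) \<le> ln (real Dd + 1)"
proof -
  have "1 / (real Dd + 1) \<le> 1 / (real (d k) + 1)" using assms by (simp add: frac_le)
  also have "\<dots> \<le> x k" by (rule lower)
  finally have "1 / x k \<le> real Dd + 1" using pos[of k] by (simp add: field_simps)
  thus ?thesis using pos[of k] by simp
qed

lemma bt_summable: assumes "\<And>i. d i \<le> Dd" shows "summable (bt x)"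
proof (rule summable_comparison_test)
  show "\<exists>N. \<forall>n\<ge>N. norm (bt x n) \<le> 2 * ln (real Dd + 1) * (3/4) ^ n"
  proof (intro exI allI impI)
    fix n :: nat
    have "norm (bt x n) = bt x n" using bt_nonneg[of n] by simp
    also have "\<dots> \<le> 2 * (3/4) ^ n * ln (1 / x n)" by (rule bt_le)
    also have "\<dots> \<le> 2 * (3/4) ^ n * ln (real Dd + 1)"
      using ln_le_digit[OF assms] by (intro mult_left_mono) auto
    finally show "norm (bt x n) \<le> 2 * ln (real Dd + 1) * (3/4) ^ n" by (simp add: mult_ac)
  qed
  show "summable (\<lambda>n. 2 * ln (real Dd + 1) * (3/4::real) ^ n)"
    by (intro summable_mult summable_geometric) simp
qed

end

lemma diff_bound_aux:
  assumes A: "cfseq xA dA" and B: "cfseq xB dB" and eq: "\<And>i. i < p \<Longrightarrow> dA i = dB i"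
  shows "r \<le> p \<Longrightarrow> \<bar>xA (p - r) - xB (p - r)\<bar> \<le> (\<Prod>j<r. xA (p - r + j))"
proof (induction r)
  case 0
  have "0 < xA p" "xA p \<le> 1" "0 < xB p" "xB p \<le> 1"
    using cfseq.pos[OF A] cfseq.pos[OF B] cfseq.le1[OF A] cfseq.le1[OF B] by auto
  then show ?case by (simp add: abs_le_iff)
next
  case (Suc r)
  define i where "i = p - Suc r"
  have ip: "Suc i = p - r" "i < p" using Suc.prems by (auto simp: i_def)
  define a' where "a' = xA (Suc i)"
  define b' where "b' = xB (Suc i)"
  have recA: "xA i = 1 / (real (dA i) + a')" using cfseq.rec[OF A, of i] a'_def by simp
  have recB: "xB i = 1 / (real (dA i) + b')" using cfseq.rec[OF B, of i] eq[OF ip(2)] b'_def by simp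
  have a'p: "a' > 0" "b' > 0" using cfseq.pos[OF A] cfseq.pos[OF B] a'_def b'_def by auto
  have dpos: "real (dA i) + a' > 0" "real (dA i) + b' > 0" using a'p by (simp_all add: add_nonneg_pos)
  have "xA i - xB i = (b' - a') * xA i * xB i"
    unfolding recA recB using dpos by (simp add: divide_simps)
  hence "\<bar>xA i - xB i\<bar> = \<bar>a' - b'\<bar> * xA i * xB i"
    using cfseq.pos[OF A, of i] cfseq.pos[OF B, of i] by (simp add: abs_mult abs_minus_commute)
  also have "\<dots> \<le> \<bar>a' - b'\<bar> * xA i * 1"
    using cfseq.pos[OF A, of i] cfseq.le1[OF B, of i] by (intro mult_left_mono) auto
  also have "\<dots> \<le> (\<Prod>j<r. xA (Suc i + j)) * xA i"
  proof -
    have rp: "r \<le> p" using Suc.prems by simp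
    have IH': "\<bar>a' - b'\<bar> \<le> (\<Prod>j<r. xA (Suc i + j))"
      using Suc.IH[OF rp] unfolding a'_def b'_def by (simp only: ip(1))
    show ?thesis using mult_right_mono[OF IH' less_imp_le[OF cfseq.pos[OF A, of i]]] by simp
  qed
  also have "\<dots> = (\<Prod>j<Suc r. xA (i + j))"
    unfolding prod.lessThan_Suc_shift by (simp add: mult.commute)
  finally show ?case by (simp add: i_def)
qed

lemma diff_bound:
  assumes A: "cfseq xA dA" and B: "cfseq xB dB" and eq: "\<And>i. i < p \<Longrightarrow> dA i = dB i"
    and "i \<le> p"
  shows "\<bar>xA i - xB i\<bar> \<le> 2 * (3/4) ^ (p - i)"
proof -
  have "\<bar>xA (p - (p - i)) - xB (p - (p - i))\<bar> \<le> (\<Prod>j<p - i. xA (p - (p - i) + j))"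
    by (rule diff_bound_aux[OF A B eq]) auto
  hence "\<bar>xA i - xB i\<bar> \<le> (\<Prod>j<p - i. xA (i + j))" using assms(4) by simp
  also have "\<dots> \<le> 2 * (3/4) ^ (p - i)" by (rule cfseq.prod_bound[OF A])
  finally show ?thesis .
qed

lemma prod_diff:
  fixes f g :: "nat \<Rightarrow> real"
  assumes "\<And>i. 0 \<le> f i" "\<And>i. f i \<le> 1" "\<And>i. 0 \<le> g i" "\<And>i. g i \<le> 1"
  shows "\<bar>(\<Prod>i<k. f i) - (\<Prod>i<k. g i)\<bar> \<le> (\<Sum>i<k. \<bar>f i - g i\<bar>)"
proof (induction k)
  case 0 then show ?case by simp
next
  case (Suc k)
  let ?F = "\<Prod>i<k. f i" and ?G = "\<Prod>i<k. g i"
  have G: "0 \<le> ?G" "?G \<le> 1" using assms by (auto intro: prod_nonneg prod_le_1)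
  have "(\<Prod>i<Suc k. f i) - (\<Prod>i<Suc k. g i) = (?F - ?G) * f k + ?G * (f k - g k)"
    by (simp add: algebra_simps)
  hence "\<bar>(\<Prod>i<Suc k. f i) - (\<Prod>i<Suc k. g i)\<bar> \<le> \<bar>?F - ?G\<bar> * \<bar>f k\<bar> + \<bar>?G\<bar> * \<bar>f k - g k\<bar>"
    by (metis abs_mult abs_triangle_ineq)
  also have "\<dots> \<le> \<bar>?F - ?G\<bar> * 1 + 1 * \<bar>f k - g k\<bar>"
    using assms G by (intro add_mono mult_mono) auto
  also have "\<dots> \<le> (\<Sum>i<Suc k. \<bar>f i - g i\<bar>)" using Suc by simp
  finally show ?case .
qed

lemma ln_diff:
  fixes x y c :: real
  assumes "0 < c" "c \<le> x" "c \<le> y"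
  shows "\<bar>ln (1 / x) - ln (1 / y)\<bar> \<le> \<bar>x - y\<bar> / c"
proof -
  have x: "x > 0" and y: "y > 0" using assms by auto
  have h: "ln u - ln v \<le> \<bar>u - v\<bar> / c" if "c \<le> u" "c \<le> v" for u v
  proof -
    have "ln u - ln v = ln (u / v)" using that assms by (simp add: ln_div)
    also have "\<dots> \<le> u / v - 1" using that assms by (intro ln_le_minus_one) simp
    also have "\<dots> = (u - v) / v" using that assms by (simp add: field_simps)
    also have "\<dots> \<le> \<bar>u - v\<bar> / v" using that assms by (intro divide_right_mono) auto
    also have "\<dots> \<le> \<bar>u - v\<bar> / c" using that assms by (intro divide_left_mono) auto
    finally show ?thesis .
  qed
  have "ln (1 / x) - ln (1 / y) = ln y - ln x" using x y by (simp add: ln_div)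
  thus ?thesis using h[of y x] h[of x y] assms by (simp add: abs_le_iff abs_minus_commute)
qed

lemma head_bound:
  assumes A: "cfseq xA dA" and B: "cfseq xB dB"
  and eq: "\<And>i. i \<noteq> p \<Longrightarrow> dA i = dB i"
  and Dle: "\<And>i. i \<noteq> p \<Longrightarrow> dA i \<le> D"
  and K: "K < p" and k: "k < K"
  shows "\<bar>bt xA k - bt xB k\<bar> \<le> 2 * (3/4) ^ (p - K) * (real K * ln (real D + 1) + (real D + 1))"
proof -
  define E :: real where "E = 2 * (3/4) ^ (p - K)"
  define L0 where "L0 = ln (real D + 1)"
  have eq': "\<And>i. i < p \<Longrightarrow> dA i = dB i" using eq by simp
  have xd: "\<bar>xA i - xB i\<bar> \<le> E" if "i \<le> K" for i
  proof -
    have ip: "i \<le> p" using that K by linarith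
    have "\<bar>xA i - xB i\<bar> \<le> 2 * (3/4) ^ (p - i)"
      by (rule diff_bound[OF A B eq' ip])
    also have "\<dots> \<le> E" unfolding E_def using that K by (intro mult_left_mono power_decreasing) auto
    finally show ?thesis .
  qed
  have c: "1 / (real D + 1) \<le> xA i" "1 / (real D + 1) \<le> xB i" if "i \<noteq> p" for i
  proof -
    have "1 / (real D + 1) \<le> 1 / (real (dA i) + 1)" using Dle[OF that] by (simp add: frac_le)
    thus "1 / (real D + 1) \<le> xA i" "1 / (real D + 1) \<le> xB i"
      using cfseq.lower[OF A, of i] cfseq.lower[OF B, of i] eq[OF that] by auto
  qed
  have kp: "k \<noteq> p" using K k by simp
  define PA where "PA = (\<Prod>i<k. xA i)"
  define PB where "PB = (\<Prod>i<k. xB i)"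
  define lA where "lA = ln (1 / xA k)"
  define lB where "lB = ln (1 / xB k)"
  have PB: "0 \<le> PB" "PB \<le> 1" unfolding PB_def
    using cfseq.prod_nonneg'[OF B, of id] cfseq.prod_le1[OF B, of id] by auto
  have lA: "0 \<le> lA" "lA \<le> L0" unfolding lA_def L0_def
    using cfseq.ln_nonneg[OF A] cfseq.ln_le_digit[OF A Dle[OF kp]] by auto
  have dP: "\<bar>PA - PB\<bar> \<le> real K * E"
  proof -
    have "\<bar>PA - PB\<bar> \<le> (\<Sum>i<k. \<bar>xA i - xB i\<bar>)" unfolding PA_def PB_def
    proof (rule prod_diff)
      fix i
      show "0 \<le> xA i" using cfseq.pos[OF A, of i] by simp
      show "0 \<le> xB i" using cfseq.pos[OF B, of i] by simp
      show "xA i \<le> 1" by (rule cfseq.le1[OF A])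
      show "xB i \<le> 1" by (rule cfseq.le1[OF B])
    qed
    also have "\<dots> \<le> (\<Sum>i<k. E)" using xd k by (intro sum_mono) simp
    also have "\<dots> = real k * E" by simp
    also have "\<dots> \<le> real K * E" using k unfolding E_def by (intro mult_right_mono) auto
    finally show ?thesis .
  qed
  have dl: "\<bar>lA - lB\<bar> \<le> (real D + 1) * E"
  proof -
    have "\<bar>lA - lB\<bar> \<le> \<bar>xA k - xB k\<bar> / (1 / (real D + 1))" unfolding lA_def lB_def
      by (rule ln_diff) (use c[OF kp] in auto)
    also have "\<dots> = (real D + 1) * \<bar>xA k - xB k\<bar>" by simp
    also have "\<dots> \<le> (real D + 1) * E" using xd k by (intro mult_left_mono) auto
    finally show ?thesis .
  qed
  have "bt xA k - bt xB k = (PA - PB) * lA + PB * (lA - lB)"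
    unfolding bt_def PA_def PB_def lA_def lB_def by (simp add: algebra_simps)
  hence "\<bar>bt xA k - bt xB k\<bar> \<le> \<bar>PA - PB\<bar> * \<bar>lA\<bar> + \<bar>PB\<bar> * \<bar>lA - lB\<bar>"
    by (metis abs_mult abs_triangle_ineq)
  also have "\<dots> \<le> (real K * E) * L0 + 1 * ((real D + 1) * E)"
    using dP dl lA PB by (intro add_mono mult_mono) auto
  also have "\<dots> = E * (real K * L0 + (real D + 1))" by (simp add: algebra_simps)
  finally show ?thesis unfolding E_def L0_def .
qed

lemma tail_bound:
  assumes A: "cfseq xA dA" and B: "cfseq xB dB"
  and eq: "\<And>i. i \<noteq> p \<Longrightarrow> dA i = dB i"
  and one: "\<And>i. n < i \<Longrightarrow> i \<noteq> p \<Longrightarrow> dA i = 1"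
  and ki: "n < k" "k \<noteq> p"
  shows "\<bar>bt xA k - bt xB k\<bar> \<le> 4 * (3/4) ^ k"
proof -
  have l2: "ln (2::real) \<le> 1" using ln_le_minus_one[of 2] by simp
  have "ln (1 / xA k) \<le> ln (real 1 + 1)"
    by (rule cfseq.ln_le_digit[OF A]) (use one[OF ki] in simp)
  hence la: "ln (1 / xA k) \<le> 1" using l2 by simp
  have "ln (1 / xB k) \<le> ln (real 1 + 1)"
    by (rule cfseq.ln_le_digit[OF B]) (use one[OF ki] eq[OF ki(2)] in simp)
  hence lb: "ln (1 / xB k) \<le> 1" using l2 by simp
  have "2 * (3/4) ^ k * ln (1 / xA k) \<le> 2 * (3/4::real) ^ k * 1"
    using la by (intro mult_left_mono) auto
  hence "bt xA k \<le> 2 * (3/4) ^ k * 1" using cfseq.bt_le[OF A, of k] by linarith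
  moreover have "2 * (3/4) ^ k * ln (1 / xB k) \<le> 2 * (3/4::real) ^ k * 1"
    using lb by (intro mult_left_mono) auto
  hence "bt xB k \<le> 2 * (3/4) ^ k * 1" using cfseq.bt_le[OF B, of k] by linarith
  ultimately show ?thesis using cfseq.bt_nonneg[OF A, of k] cfseq.bt_nonneg[OF B, of k] by (simp add: abs_le_iff)
qed

lemma combine:
  assumes A: "cfseq xA dA" and B: "cfseq xB dB"
  and eq: "\<And>i. i \<noteq> p \<Longrightarrow> dA i = dB i"
  and one: "\<And>i. n < i \<Longrightarrow> i \<noteq> p \<Longrightarrow> dA i = 1"
  and Dle: "\<And>i. i \<noteq> p \<Longrightarrow> dA i \<le> D"
  and sA: "summable (bt xA)" and sB: "summable (bt xB)"
  and K: "n < K" "K < p"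
  shows "\<bar>(suminf (bt xA) - bt xA p) - (suminf (bt xB) - bt xB p)\<bar>
     \<le> real K * (2 * (3/4) ^ (p - K) * (real K * ln (real D + 1) + (real D + 1))) + 16 * (3/4) ^ K"
proof -
  define H :: real where "H = 2 * (3/4) ^ (p - K) * (real K * ln (real D + 1) + (real D + 1))"
  define w where "w k = bt xA k - bt xB k" for k
  have sw: "summable w" unfolding w_def by (rule summable_diff[OF sA sB])
  define u where "u = (\<lambda>k. if k = p then 0 else w k)"
  have "(\<lambda>k. w k - (if k = p then w k else 0)) sums (suminf w - w p)"
    by (rule sums_diff[OF summable_sums[OF sw] sums_single[of p w]])
  moreover have "(\<lambda>k. w k - (if k = p then w k else 0)) = u" by (auto simp: u_def)
  ultimately have usums: "u sums (suminf w - w p)" by simp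
  hence su: "summable u" and uval: "suminf u = suminf w - w p" by (auto simp: sums_iff)
  have lhs: "(suminf (bt xA) - bt xA p) - (suminf (bt xB) - bt xB p) = suminf u"
    using uval suminf_diff[OF sA sB] unfolding w_def by simp
  have split: "suminf u = (\<Sum>n. u (n + K)) + (\<Sum>i<K. u i)"
    by (rule suminf_split_initial_segment[OF su])
  have head: "\<bar>\<Sum>i<K. u i\<bar> \<le> real K * H"
  proof -
    have "\<bar>\<Sum>i<K. u i\<bar> \<le> (\<Sum>i<K. \<bar>u i\<bar>)" by (rule sum_abs)
    also have "\<dots> \<le> (\<Sum>i<K. H)"
    proof (rule sum_mono)
      fix i assume "i \<in> {..<K}"
      hence i: "i < K" by simp
      hence "u i = w i" using K by (simp add: u_def)
      thus "\<bar>u i\<bar> \<le> H" unfolding w_def H_def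
        using head_bound[OF A B eq Dle K(2) i] by simp
    qed
    also have "\<dots> = real K * H" by simp
    finally show ?thesis .
  qed
  define g where "g n = (4 * (3/4) ^ K) * (3/4::real) ^ n" for n
  have sg: "summable g" unfolding g_def by (intro summable_mult summable_geometric) simp
  have gval: "suminf g = 16 * (3/4) ^ K" unfolding g_def
    by (subst suminf_mult) (auto intro!: summable_geometric simp: suminf_geometric)
  have ub: "\<bar>u (n + K)\<bar> \<le> g n" for n
  proof (cases "n + K = p")
    case True then show ?thesis by (simp add: u_def g_def)
  next
    case False
    have "\<bar>u (n + K)\<bar> = \<bar>bt xA (n + K) - bt xB (n + K)\<bar>" using False by (simp add: u_def w_def)
    also have "\<dots> \<le> 4 * (3/4) ^ (n + K)"
      by (rule tail_bound[OF A B eq one]) (use K False in auto)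
    also have "\<dots> = g n" by (simp add: g_def power_add)
    finally show ?thesis .
  qed
  have sabs: "summable (\<lambda>n. \<bar>u (n + K)\<bar>)"
    by (rule summable_comparison_test[OF _ sg]) (use ub in auto)
  have "\<bar>\<Sum>n. u (n + K)\<bar> \<le> (\<Sum>n. \<bar>u (n + K)\<bar>)" by (rule summable_rabs[OF sabs])
  also have "\<dots> \<le> suminf g" by (rule suminf_le[OF ub sabs sg])
  finally have tail: "\<bar>\<Sum>n. u (n + K)\<bar> \<le> 16 * (3/4) ^ K" using gval by simp
  have "\<bar>suminf u\<bar> \<le> \<bar>\<Sum>n. u (n + K)\<bar> + \<bar>\<Sum>i<K. u i\<bar>" unfolding split by (rule abs_triangle_ineq)
  also have "\<dots> \<le> 16 * (3/4) ^ K + real K * H" using head tail by simp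
  finally show ?thesis unfolding lhs H_def by simp
qed

lemma bd_ge1:
  assumes "\<forall>x \<in> set a. x > 0" "N \<ge> 1"
  shows "beta_digits a m N i \<ge> 1"
proof -
  have "i < length a \<Longrightarrow> a ! i > 0" using assms(1) nth_mem[of i a] by blast
  thus ?thesis using assms(2) by (cases "i < length a") (simp_all add: beta_digits_def)
qed

lemma bd_cfseq:
  assumes "\<forall>x \<in> set a. x > 0" "N \<ge> 1" "m \<ge> 1"
  shows "cfseq (cf_alpha (beta_digits a m N)) (beta_digits a m N)"
proof -
  have g1: "\<And>i. beta_digits a m N i \<ge> 1" using bd_ge1[OF assms(1,2)] .
  have ev: "\<And>i. i \<ge> length a + m + 1 \<Longrightarrow> beta_digits a m N i = 1"
    using assms by (auto simp: beta_digits_def)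
  show ?thesis
  proof
    fix j
    show "cf_alpha (beta_digits a m N) j = 1 / (real (beta_digits a m N j) + cf_alpha (beta_digits a m N) (Suc j))"
      by (rule cf_alpha_rec(1)[OF g1 ev])
    show "cf_alpha (beta_digits a m N) j > 0" by (rule cf_alpha_rec(2)[OF g1 ev])
    show "beta_digits a m N j \<ge> 1" by (rule g1)
  qed
qed

lemma bm_eq: "brjuno_minus a m d = suminf (bt (cf_alpha d)) - bt (cf_alpha d) (length a - 1 + m)"
  by (simp add: brjuno_minus_def brjuno_def bt_def[abs_def])

lemma pair_bound:
  fixes a :: "nat list"
  assumes ne: "a \<noteq> []" and pos: "\<forall>x \<in> set a. x > 0" and m: "m \<ge> 1" and N: "N \<ge> 1"
    and K: "length a - 1 < K" "K < length a - 1 + m"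
  shows "\<bar>brjuno_minus a m (beta_digits a m N) - brjuno_minus a m (beta_digits a m (N + 1))\<bar>
     \<le> real K * (2 * (3/4) ^ (length a - 1 + m - K) * (real K * ln (real (Max (set a)) + 1) + (real (Max (set a)) + 1))) + 16 * (3/4) ^ K"
proof -
  define p where "p = length a - 1 + m"
  define D where "D = Max (set a)"
  define dA where "dA = beta_digits a m N"
  define dB where "dB = beta_digits a m (N + 1)"
  have A: "cfseq (cf_alpha dA) dA" unfolding dA_def by (rule bd_cfseq[OF pos N m])
  have B: "cfseq (cf_alpha dB) dB" unfolding dB_def by (rule bd_cfseq[OF pos _ m]) simp
  have la: "length a \<ge> 1" using ne by (cases a) auto
  have eq: "\<And>i. i \<noteq> p \<Longrightarrow> dA i = dB i" unfolding dA_def dB_def p_def beta_digits_def by simp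
  have one: "\<And>i. length a - 1 < i \<Longrightarrow> i \<noteq> p \<Longrightarrow> dA i = 1"
    unfolding dA_def p_def beta_digits_def by auto
  have D1: "D \<ge> 1"
  proof -
    have "hd a \<in> set a" using ne by simp
    hence "hd a \<le> D" "hd a > 0" unfolding D_def using pos by auto
    thus ?thesis by simp
  qed
  have pa: "\<not> p < length a" unfolding p_def using m la by simp
  have Dle: "dA i \<le> D" if ip: "i \<noteq> p" for i
  proof (cases "i < length a")
    case True
    hence "dA i = a ! i" by (simp add: dA_def beta_digits_def)
    moreover have "a ! i \<le> D" unfolding D_def using True by (intro Max_ge) auto
    ultimately show ?thesis by simp
  next
    case False
    hence "dA i = 1" using ip by (simp add: dA_def beta_digits_def p_def)
    thus ?thesis using D1 by simp
  qed
  have dAp: "dA p = N" using pa by (simp add: dA_def beta_digits_def p_def)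
  have dBp: "dB p = N + 1" using pa by (simp add: dB_def beta_digits_def p_def)
  have DleA: "dA i \<le> D + N" for i
  proof (cases "i = p")
    case True then show ?thesis using dAp by simp
  next
    case False then show ?thesis using Dle[OF False] by simp
  qed
  have DleB: "dB i \<le> D + (N + 1)" for i
  proof (cases "i = p")
    case True then show ?thesis using dBp by simp
  next
    case False then show ?thesis using Dle[OF False] eq[OF False] by simp
  qed
  have sA: "summable (bt (cf_alpha dA))" by (rule cfseq.bt_summable[OF A DleA])
  have sB: "summable (bt (cf_alpha dB))" by (rule cfseq.bt_summable[OF B DleB])
  show ?thesis
    using combine[OF A B eq one Dle sA sB K[folded p_def]]
    unfolding bm_eq dA_def dB_def p_def D_def .
qed

theorem mainTheorem7:
  fixes a :: "nat list"
  assumes "a \<noteq> []" and "\<forall>x \<in> set a. x > 0"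
  shows "\<forall>\<epsilon>::real. \<epsilon> > 0 \<longrightarrow> (\<exists>m0::nat. m0 > 0 \<and>
           (\<forall>m N. m \<ge> m0 \<longrightarrow> N \<ge> 1 \<longrightarrow>
              \<bar>brjuno_minus a m (beta_digits a m N) - brjuno_minus a m (beta_digits a m (N + 1))\<bar> < \<epsilon> / 2))"
proof (intro allI impI)
  fix \<epsilon> :: real assume e: "\<epsilon> > 0"
  define n where "n = length a - 1"
  define D where "D = Max (set a)"
  obtain K0 where K0: "(3/4::real) ^ K0 < \<epsilon> / 64" using real_arch_pow_inv[of "\<epsilon> / 64" "3/4"] e by auto
  define K where "K = K0 + n + 1"
  have pK: "(3/4::real) ^ K \<le> (3/4) ^ K0" unfolding K_def by (intro power_decreasing) auto
  have tailK: "16 * (3/4::real) ^ K < \<epsilon> / 4" using pK K0 by linarith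
  define Q where "Q = real K * ln (real D + 1) + (real D + 1)"
  have Qpos: "Q > 0" unfolding Q_def by (simp add: add_nonneg_pos)
  have Kpos: "real K > 0" unfolding K_def by simp
  obtain M where M: "(3/4::real) ^ M < \<epsilon> / (8 * real K * Q)"
    using real_arch_pow_inv[of "\<epsilon> / (8 * real K * Q)" "3/4"] e Qpos Kpos by auto
  show "\<exists>m0::nat. m0 > 0 \<and> (\<forall>m N. m \<ge> m0 \<longrightarrow> N \<ge> 1 \<longrightarrow>
              \<bar>brjuno_minus a m (beta_digits a m N) - brjuno_minus a m (beta_digits a m (N + 1))\<bar> < \<epsilon> / 2)"
  proof (intro exI[of _ "K + M + 1"] conjI allI impI)
    show "K + M + 1 > 0" by simp
    fix m N :: nat assume m: "m \<ge> K + M + 1" and N: "N \<ge> 1"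
    have Kb: "length a - 1 < K" "K < length a - 1 + m" using m unfolding K_def n_def by auto
    have pb: "\<bar>brjuno_minus a m (beta_digits a m N) - brjuno_minus a m (beta_digits a m (N + 1))\<bar>
     \<le> real K * (2 * (3/4) ^ (length a - 1 + m - K) * Q) + 16 * (3/4) ^ K"
      using pair_bound[OF assms(1) assms(2) _ N Kb] m unfolding Q_def D_def by simp
    have "(3/4::real) ^ (length a - 1 + m - K) \<le> (3/4) ^ M"
      using m by (intro power_decreasing) auto
    hence "(3/4::real) ^ (length a - 1 + m - K) < \<epsilon> / (8 * real K * Q)" using M by linarith
    hence "(8 * real K * Q) * (3/4::real) ^ (length a - 1 + m - K) < (8 * real K * Q) * (\<epsilon> / (8 * real K * Q))"
      using Qpos Kpos by (intro mult_strict_left_mono) auto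
    also have "\<dots> = \<epsilon>" using Qpos Kpos by simp
    finally have "real K * (2 * (3/4) ^ (length a - 1 + m - K) * Q) < \<epsilon> / 4"
      by (simp add: algebra_simps)
    thus "\<bar>brjuno_minus a m (beta_digits a m N) - brjuno_minus a m (beta_digits a m (N + 1))\<bar> < \<epsilon> / 2"
      using pb tailK by linarith
  qed
qed

end
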